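(* Let $G=(S,T,\pi)$ be a two-person win-lose game such that every set in $\mathcal{B}^1(G)$ is finite. Then the following are equivalent: (1) $\mathcal{B}^1_{\downarrow}(G)$ is ascending-union closed; (2) $\mathcal{B}^1_{\downarrow}(G)$ contains no countable strictly ascending chain $A_1\subsetneq A_2\subsetneq\cdots$; (3) $G$ is LNG-free.
   Context: A two-person win-lose game is a triple $G=(S,T,\pi)$ with non-empty sets $S,T$ and $\pi:S\times T\to\{0,1\}$. For $s\in S$, $B_s=\{t\in T:\pi(s,t)=1\}$, $\mathcal{B}^1(G)=\{B_s:s\in S\}$, $\mathcal{B}^1_{\downarrow}(G)=\{A\subseteq T:\exists s\in S,\ A\subseteq B_s\}$. A family $\mathcal{F}$ is ascending-union closed if $A_i\in\mathcal{F}$ ($i\ge1$) with $A_1\subset A_2\subset\cdots$ implies $\bigcup_iA_i\in\mathcal{F}$. The larger number game (LNG) is $(\mathbb{N},\mathbb{N},\pi)$ with $\pi(s,t)=1$ iff $s\ge t$. $G$ is LNG-free if there are no sequences of distinct $s_1,s_2,\ldots\in S$ and distinct $t_1,t_2,\ldots\in T$ with $\pi(s_i,t_j)=1\iff i\ge j$ (i.e., no subgame is isomorphic to LNG). *)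

theory Defs
  imports Main
begin

text \<open>A two-person win-lose game (S,T,pi): S, T nonempty sets (carriers in types 's, 't),
  payoff pi : S x T -> {0,1}, rendered as a boolean predicate (True = 1).\<close>

definition win_lose_game :: "'s set \<Rightarrow> 't set \<Rightarrow> ('s \<Rightarrow> 't \<Rightarrow> bool) \<Rightarrow> bool" where
  "win_lose_game S T pi \<longleftrightarrow> S \<noteq> {} \<and> T \<noteq> {}"

definition Bset :: "'t set \<Rightarrow> ('s \<Rightarrow> 't \<Rightarrow> bool) \<Rightarrow> 's \<Rightarrow> 't set" where
  "Bset T pi s = {t \<in> T. pi s t}"

definition B1 :: "'s set \<Rightarrow> 't set \<Rightarrow> ('s \<Rightarrow> 't \<Rightarrow> bool) \<Rightarrow> 't set set" where
  "B1 S T pi = (Bset T pi) ` S"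

definition B1_down :: "'s set \<Rightarrow> 't set \<Rightarrow> ('s \<Rightarrow> 't \<Rightarrow> bool) \<Rightarrow> 't set set" where
  "B1_down S T pi = {A. A \<subseteq> T \<and> (\<exists>s\<in>S. A \<subseteq> Bset T pi s)}"

definition ascending_union_closed :: "'a set set \<Rightarrow> bool" where
  "ascending_union_closed F \<longleftrightarrow>
     (\<forall>A :: nat \<Rightarrow> 'a set. (\<forall>i. A i \<in> F) \<and> (\<forall>i. A i \<subset> A (Suc i)) \<longrightarrow> (\<Union>i. A i) \<in> F)"

definition has_strict_ascending_chain :: "'a set set \<Rightarrow> bool" where
  "has_strict_ascending_chain F \<longleftrightarrow>
     (\<exists>A :: nat \<Rightarrow> 'a set. (\<forall>i. A i \<in> F) \<and> (\<forall>i. A i \<subset> A (Suc i)))"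

definition LNG_free :: "'s set \<Rightarrow> 't set \<Rightarrow> ('s \<Rightarrow> 't \<Rightarrow> bool) \<Rightarrow> bool" where
  "LNG_free S T pi \<longleftrightarrow>
     \<not> (\<exists>(s :: nat \<Rightarrow> 's) (t :: nat \<Rightarrow> 't).
          inj s \<and> range s \<subseteq> S \<and> inj t \<and> range t \<subseteq> T \<and>
          (\<forall>i j. pi (s i) (t j) \<longleftrightarrow> j \<le> i))"

end

theory Submission
  imports Defs
begin

lemma build_lng:
  fixes B :: "'s \<Rightarrow> 't set"
  assumes U: "infinite U"
    and cov: "\<And>F. finite F \<Longrightarrow> F \<subseteq> U \<Longrightarrow> \<exists>s\<in>S. F \<subseteq> B s"
    and fin: "\<And>s. s \<in> S \<Longrightarrow> finite (B s)"
  shows "\<exists>(s :: nat \<Rightarrow> 's) (t :: nat \<Rightarrow> 't). range s \<subseteq> S \<and> range t \<subseteq> U \<and>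
           (\<forall>i j. t j \<in> B (s i) \<longleftrightarrow> j \<le> i)"
proof -
  define P where "P = (\<lambda>(n::nat) (x :: 't set \<times> 't set \<times> 't \<times> 's).
     case x of (F, X, t, s) \<Rightarrow> finite F \<and> F \<subseteq> U \<and> finite X \<and> F \<subseteq> B s \<and> s \<in> S \<and> t \<in> F \<and> B s \<subseteq> X)"
  define Q where "Q = (\<lambda>(n::nat) (x :: 't set \<times> 't set \<times> 't \<times> 's) (y :: 't set \<times> 't set \<times> 't \<times> 's).
     case x of (F, X, t, s) \<Rightarrow> case y of (F', X', t', s') \<Rightarrow> t' \<notin> X \<and> F \<subseteq> F' \<and> X \<subseteq> X')"
  have "\<exists>f. \<forall>n. P n (f n) \<and> Q n (f n) (f (Suc n))"
  proof (rule dependent_nat_choice)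
    obtain t0 where t0: "t0 \<in> U" using infinite_imp_nonempty[OF U] by blast
    then obtain s0 where s0: "s0 \<in> S" "{t0} \<subseteq> B s0" using cov[of "{t0}"] by auto
    show "\<exists>x. P 0 x"
      by (rule exI[of _ "({t0}, B s0, t0, s0)"]) (use t0 s0 fin in \<open>auto simp: P_def\<close>)
  next
    fix x n assume "P n x"
    then obtain F X t s where x: "x = (F, X, t, s)" and h: "finite F" "F \<subseteq> U" "finite X"
      "F \<subseteq> B s" "s \<in> S" "t \<in> F" "B s \<subseteq> X"
      unfolding P_def by (cases x) auto
    have "infinite (U - X)" using U h(3) by (simp add: Diff_infinite_finite)
    then obtain t' where t': "t' \<in> U" "t' \<notin> X"
      using infinite_imp_nonempty by blast
    obtain s' where s': "s' \<in> S" "insert t' F \<subseteq> B s'"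
      using cov[of "insert t' F"] h t' by auto
    show "\<exists>y. P (Suc n) y \<and> Q n x y"
      by (rule exI[of _ "(insert t' F, X \<union> B s', t', s')"])
        (use h t' s' fin in \<open>auto simp: P_def Q_def x\<close>)
  qed
  then obtain f where f: "\<And>n. P n (f n)" "\<And>n. Q n (f n) (f (Suc n))" by blast
  define FF where "FF n = fst (f n)" for n
  define XX where "XX n = fst (snd (f n))" for n
  define tt where "tt n = fst (snd (snd (f n)))" for n
  define ss where "ss n = snd (snd (snd (f n)))" for n
  have P': "finite (FF n) \<and> FF n \<subseteq> U \<and> finite (XX n) \<and> FF n \<subseteq> B (ss n) \<and> ss n \<in> S
     \<and> tt n \<in> FF n \<and> B (ss n) \<subseteq> XX n" for n
    using f(1)[of n] unfolding P_def FF_def XX_def tt_def ss_def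
    by (cases "f n") auto
  have Q': "tt (Suc n) \<notin> XX n \<and> FF n \<subseteq> FF (Suc n) \<and> XX n \<subseteq> XX (Suc n)" for n
    using f(2)[of n] unfolding Q_def FF_def XX_def tt_def ss_def
    by (cases "f n"; cases "f (Suc n)") auto
  have monoF: "m \<le> n \<Longrightarrow> FF m \<subseteq> FF n" for m n
    by (rule lift_Suc_mono_le[of FF]) (use Q' in auto)
  have monoX: "m \<le> n \<Longrightarrow> XX m \<subseteq> XX n" for m n
    by (rule lift_Suc_mono_le[of XX]) (use Q' in auto)
  have key: "tt j \<in> B (ss i) \<longleftrightarrow> j \<le> i" for i j
  proof
    assume a: "tt j \<in> B (ss i)"
    show "j \<le> i"
    proof (rule ccontr)
      assume "\<not> j \<le> i"
      then obtain k where k: "j = Suc k" "i \<le> k" by (cases j) auto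
      have "tt j \<in> XX k" using a P'[of i] monoX[OF k(2)] by auto
      then show False using Q'[of k] k by auto
    qed
  next
    assume "j \<le> i"
    then show "tt j \<in> B (ss i)" using P'[of j] P'[of i] monoF[of j i] by auto
  qed
  show ?thesis
    by (rule exI[of _ ss], rule exI[of _ tt]) (use P' key in auto)
qed

lemma inj_from_key:
  fixes s :: "nat \<Rightarrow> 's" and t :: "nat \<Rightarrow> 't"
  assumes key: "\<forall>i j. pi (s i) (t j) \<longleftrightarrow> j \<le> i"
  shows "inj s \<and> inj t"
proof
  show "inj s"
  proof (rule linorder_injI)
    fix i k :: nat assume "i < k"
    then show "s i \<noteq> s k" using key[rule_format, of i k] key[rule_format, of k k] by auto
  qed
  show "inj t"
  proof (rule linorder_injI)
    fix i k :: nat assume "i < k"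
    then show "t i \<noteq> t k" using key[rule_format, of i i] key[rule_format, of i k] by auto
  qed
qed

theorem proposition2p9:
  fixes S :: "'s set" and T :: "'t set" and pi :: "'s \<Rightarrow> 't \<Rightarrow> bool"
  assumes "win_lose_game S T pi"
    and "\<forall>B \<in> B1 S T pi. finite B"
  shows "(ascending_union_closed (B1_down S T pi) \<longleftrightarrow> \<not> has_strict_ascending_chain (B1_down S T pi))
       \<and> (\<not> has_strict_ascending_chain (B1_down S T pi) \<longleftrightarrow> LNG_free S T pi)"
proof -
  have finB: "finite (Bset T pi s)" if "s \<in> S" for s
    using assms(2) that unfolding B1_def by auto
  have finD: "finite A" if "A \<in> B1_down S T pi" for A
    using that finB unfolding B1_down_def by (auto intro: finite_subset)
  have chain_inf: "infinite (\<Union>i. A i)" if A: "\<forall>i. A i \<in> B1_down S T pi" "\<forall>i. A i \<subset> A (Suc i)"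
    for A :: "nat \<Rightarrow> 't set"
  proof
    assume fu: "finite (\<Union>i. A i)"
    have "i \<le> card (A i)" for i
    proof (induction i)
      case (Suc i)
      have "card (A i) < card (A (Suc i))"
        using A finD by (intro psubset_card_mono) auto
      then show ?case using Suc by simp
    qed simp
    moreover have "card (A i) \<le> card (\<Union>i. A i)" for i
      using fu by (intro card_mono) auto
    ultimately show False
      by (metis Suc_n_not_le_n le_trans)
  qed
  have part1: "ascending_union_closed (B1_down S T pi) \<longleftrightarrow> \<not> has_strict_ascending_chain (B1_down S T pi)"
    unfolding ascending_union_closed_def has_strict_ascending_chain_def
    using chain_inf finD by blast
  have part2a: "has_strict_ascending_chain (B1_down S T pi)" if "\<not> LNG_free S T pi"
  proof -
    from that obtain s :: "nat \<Rightarrow> 's" and t :: "nat \<Rightarrow> 't" where st: "inj s" "range s \<subseteq> S" "inj t" "range t \<subseteq> T"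
      "\<forall>i j. pi (s i) (t j) \<longleftrightarrow> j \<le> i"
      unfolding LNG_free_def by blast
    define A where "A i = t ` {..i}" for i
    have "A i \<in> B1_down S T pi" for i
      unfolding A_def B1_down_def Bset_def using st by (auto intro!: bexI[of _ "s i"])
    moreover have "A i \<subset> A (Suc i)" for i
    proof -
      have "t (Suc i) \<notin> A i" using st(3) unfolding A_def by (auto dest: injD)
      then show ?thesis unfolding A_def by auto
    qed
    ultimately show ?thesis unfolding has_strict_ascending_chain_def by blast
  qed
  have part2b: "\<not> LNG_free S T pi" if "has_strict_ascending_chain (B1_down S T pi)"
  proof -
    from that obtain A where A: "\<forall>i. A i \<in> B1_down S T pi" "\<forall>i. A i \<subset> A (Suc i)"
      unfolding has_strict_ascending_chain_def by blast
    define U where "U = (\<Union>i. A i)"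
    have Uinf: "infinite U" using chain_inf[OF A] U_def by simp
    have UT: "U \<subseteq> T" using A(1) unfolding U_def B1_down_def by auto
    have monoA: "m \<le> n \<Longrightarrow> A m \<subseteq> A n" for m n
      by (rule lift_Suc_mono_le[of A]) (use A(2) in auto)
    have sub: "\<exists>n. F \<subseteq> A n" if "finite F" "F \<subseteq> U" for F
      using that
    proof (induction F rule: finite_induct)
      case empty then show ?case by auto
    next
      case (insert x F)
      then obtain n where n: "F \<subseteq> A n" by auto
      from insert obtain k where k: "x \<in> A k" unfolding U_def by auto
      show ?case using n k monoA[of n "max n k"] monoA[of k "max n k"]
        by (intro exI[of _ "max n k"]) auto
    qed
    have cov: "\<exists>s\<in>S. F \<subseteq> Bset T pi s" if FU: "finite F" "F \<subseteq> U" for F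
    proof -
      obtain n where n: "F \<subseteq> A n" using sub[OF FU] by blast
      have "A n \<in> B1_down S T pi" using A(1) by blast
      then obtain s where "s \<in> S" "A n \<subseteq> Bset T pi s" unfolding B1_down_def by blast
      then show ?thesis using n by blast
    qed
    obtain s :: "nat \<Rightarrow> 's" and t :: "nat \<Rightarrow> 't" where st: "range s \<subseteq> S" "range t \<subseteq> U"
      "\<forall>i j. t j \<in> Bset T pi (s i) \<longleftrightarrow> j \<le> i"
      using build_lng[OF Uinf cov finB] by blast
    have tT: "t j \<in> T" for j using st(2) UT by blast
    have key: "\<forall>i j. pi (s i) (t j) \<longleftrightarrow> j \<le> i"
      using st(3) tT unfolding Bset_def by simp
    have "inj s \<and> inj t" using inj_from_key[of pi s t] key by blast
    moreover have "range t \<subseteq> T" using st(2) UT by blast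
    ultimately show ?thesis unfolding LNG_free_def using st(1) key by blast
  qed
  show ?thesis using part1 part2a part2b by blast
qed

end
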